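(* Let $S$ be a strongly finitely aligned $0$-left cancellative semigroup with right local units. Let $A$ be an associative $*$-algebra and $\pi:\mathcal H(S)\to A$ a cover-to-join $*$-representation such that $\pi(\mathcal H(S))$ spans $A$; write $\pi_s=\pi(\theta_s)$ for $s\in S$. Then $A$ is spanned by the elements $\pi_s\pi(f_\Lambda)\pi_t^*$ with $\Lambda\subseteq S$ finite and $s,t\in\Lambda$. If moreover $S$ is right reductive and categorical at zero, then $A$ is spanned by the elements $\pi_s\pi_t^*$ with $s,t\in S$.
   Context: $S$ has zero $0$, $S'=S\setminus\{0\}$; $0$-left cancellative: $st=sr\ne0\Rightarrow t=r$; right local units: each $s$ has an idempotent $e$ with $se=s$; right reductive: $sx=tx$ for all $x$ implies $s=t$; categorical at zero: $rs\ne0$, $st\ne0\Rightarrow rst\ne0$. Strongly finitely aligned: for all $s,t\in S$ there is a finite (possibly empty) $B\subseteq S'$ with $sS\cap tS=\bigcup_{b\in B}bS$ (read as $\{0\}$ if $B=\emptyset$) and $bS\cap b'S=\{0\}$ for distinct $b,b'\in B$. For $s\in S$: $F_s=\{x\in S':sx\ne0\}$, $\theta_s:F_s\to sS\setminus\{0\}$, $x\mapsto sx$; $\mathcal H(S)$ is the inverse semigroup of partial bijections of $S'$ generated by the $\theta_s$; for finite $\Lambda\subseteq S$, $f_\Lambda=\prod_{u\in\Lambda}\theta_u^{-1}\theta_u$ (identity on $\bigcap_{u\in\Lambda}F_u$). A $*$-representation is a map $\pi:\mathcal H(S)\to A$ with $\pi(0)=0$, $\pi(gh)=\pi(g)\pi(h)$,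 $\pi(g^{-1})=\pi(g)^*$. For an idempotent $e$ of $\mathcal H(S)$, idempotents $f_1,\dots,f_n\le e$ form a cover of $e$ if every nonzero idempotent $h\le e$ satisfies $hf_i\ne0$ for some $i$. $\pi$ is cover-to-join if for every such cover, $\prod_{i=1}^n(\pi(e)-\pi(f_i))=0$. *)

theory Defs
  imports Main "HOL-Analysis.Analysis"
begin

definition rideal :: "'a::{semigroup_mult,mult_zero} \<Rightarrow> 'a set" where
  "rideal s = {s * x | x. True}"

definition zero_left_cancellative :: "'a::{semigroup_mult,mult_zero} itself \<Rightarrow> bool" where
  "zero_left_cancellative _ \<longleftrightarrow> (\<forall>s t r::'a. s * t = s * r \<and> s * t \<noteq> 0 \<longrightarrow> t = r)"

definition right_local_units :: "'a::{semigroup_mult,mult_zero} itself \<Rightarrow> bool" where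
  "right_local_units _ \<longleftrightarrow> (\<forall>s::'a. \<exists>e. e * e = e \<and> s * e = s)"

definition right_reductive :: "'a::{semigroup_mult,mult_zero} itself \<Rightarrow> bool" where
  "right_reductive _ \<longleftrightarrow> (\<forall>s t::'a. (\<forall>x. s * x = t * x) \<longrightarrow> s = t)"

definition categorical_at_zero :: "'a::{semigroup_mult,mult_zero} itself \<Rightarrow> bool" where
  "categorical_at_zero _ \<longleftrightarrow> (\<forall>r s t::'a. r * s \<noteq> 0 \<and> s * t \<noteq> 0 \<longrightarrow> r * s * t \<noteq> 0)"

text \<open>sS \<inter> tS is the union of bS (b \<in> B), read as {0} if B is empty; since 0 lies in
  every bS and in sS \<inter> tS we write it as insert 0 of the union.\<close>
definition strongly_finitely_aligned :: "'a::{semigroup_mult,mult_zero} itself \<Rightarrow> bool" where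
  "strongly_finitely_aligned _ \<longleftrightarrow>
     (\<forall>s t::'a. \<exists>B. finite B \<and> 0 \<notin> B \<and>
        rideal s \<inter> rideal t = insert 0 (\<Union>b\<in>B. rideal b) \<and>
        (\<forall>b\<in>B. \<forall>b'\<in>B. b \<noteq> b' \<longrightarrow> rideal b \<inter> rideal b' = {0}))"

definition theta :: "'a::{semigroup_mult,mult_zero} \<Rightarrow> 'a \<rightharpoonup> 'a" where
  "theta s = (\<lambda>x. if x \<noteq> 0 \<and> s * x \<noteq> 0 then Some (s * x) else None)"

definition pinv :: "('a \<rightharpoonup> 'a) \<Rightarrow> ('a \<rightharpoonup> 'a)" where
  "pinv g = (\<lambda>y. if \<exists>x. g x = Some y then Some (SOME x. g x = Some y) else None)"

inductive_set HS :: "'a::{semigroup_mult,mult_zero} itself \<Rightarrow> ('a \<rightharpoonup> 'a) set"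
  for T :: "'a itself" where
  gen: "theta (s::'a) \<in> HS T"
| gen_inv: "pinv (theta (s::'a)) \<in> HS T"
| comp: "g \<in> HS T \<Longrightarrow> h \<in> HS T \<Longrightarrow> g \<circ>\<^sub>m h \<in> HS T"

definition fLam :: "'a::{semigroup_mult,mult_zero} set \<Rightarrow> 'a \<rightharpoonup> 'a" where
  "fLam \<Lambda> = (\<lambda>x. if x \<noteq> 0 \<and> (\<forall>u\<in>\<Lambda>. u * x \<noteq> 0) then Some x else None)"

definition idemH :: "'a::{semigroup_mult,mult_zero} itself \<Rightarrow> ('a \<rightharpoonup> 'a) set" where
  "idemH T = {e \<in> HS T. e \<circ>\<^sub>m e = e}"

text \<open>natural order of idempotents: f \<le> e iff f = e f\<close>
definition is_cover :: "'a::{semigroup_mult,mult_zero} itself \<Rightarrow> ('a \<rightharpoonup> 'a) \<Rightarrow> ('a \<rightharpoonup> 'a) list \<Rightarrow> bool" where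
  "is_cover T e fs \<longleftrightarrow> (\<forall>f\<in>set fs. f \<in> idemH T \<and> f = e \<circ>\<^sub>m f) \<and>
     (\<forall>h\<in>idemH T. h \<noteq> Map.empty \<and> h = e \<circ>\<^sub>m h \<longrightarrow> (\<exists>f\<in>set fs. h \<circ>\<^sub>m f \<noteq> Map.empty))"

locale star_algebra = module sc
  for sc :: "complex \<Rightarrow> 'b::ring \<Rightarrow> 'b" +
  fixes star :: "'b \<Rightarrow> 'b"
  assumes sc_mult_left: "sc c (x * y) = sc c x * y"
      and sc_mult_right: "sc c (x * y) = x * sc c y"
      and star_add: "star (x + y) = star x + star y"
      and star_sc: "star (sc c x) = sc (cnj c) (star x)"
      and star_mult: "star (x * y) = star y * star x"
      and star_star: "star (star x) = x"

text \<open>Product of a nonempty list (A need not have a unit).\<close>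
fun lprod :: "'b::times list \<Rightarrow> 'b" where
  "lprod [] = undefined"
| "lprod [x] = x"
| "lprod (x # y # ys) = x * lprod (y # ys)"

definition star_rep ::
  "'a::{semigroup_mult,mult_zero} itself \<Rightarrow> ('b::ring \<Rightarrow> 'b) \<Rightarrow> (('a \<rightharpoonup> 'a) \<Rightarrow> 'b) \<Rightarrow> bool" where
  "star_rep T star \<pi> \<longleftrightarrow> \<pi> Map.empty = 0 \<and>
     (\<forall>g\<in>HS T. \<forall>h\<in>HS T. \<pi> (g \<circ>\<^sub>m h) = \<pi> g * \<pi> h) \<and>
     (\<forall>g\<in>HS T. \<pi> (pinv g) = star (\<pi> g))"

text \<open>cover-to-join; for n = 0 a cover can only be of e = 0, where \<pi> e = 0 already, so
  covers are taken nonempty (the empty product is undefined in a non-unital algebra).\<close>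
definition cover_to_join ::
  "'a::{semigroup_mult,mult_zero} itself \<Rightarrow> (('a \<rightharpoonup> 'a) \<Rightarrow> 'b::ring) \<Rightarrow> bool" where
  "cover_to_join T \<pi> \<longleftrightarrow>
     (\<forall>e\<in>idemH T. \<forall>fs. fs \<noteq> [] \<and> is_cover T e fs \<longrightarrow> lprod (map (\<lambda>f. \<pi> e - \<pi> f) fs) = 0)"

end

theory Submission
  imports Defs
begin


lemma map_eqI2: "(\<And>x y. f x = Some y \<longleftrightarrow> g x = Some y) \<Longrightarrow> f = g"
  by (rule ext) (metis option.exhaust)

lemma theta_Some: "theta s x = Some y \<longleftrightarrow> x \<noteq> 0 \<and> s*x \<noteq> 0 \<and> y = s*x"
  by (auto simp: theta_def)

lemma fLam_Some: "fLam L x = Some y \<longleftrightarrow> y = x \<and> x \<noteq> 0 \<and> (\<forall>u\<in>L. u*x \<noteq> 0)"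
  by (auto simp: fLam_def)

lemma pinv_SomeD: "pinv g y = Some x \<Longrightarrow> g x = Some y"
  unfolding pinv_def by (auto split: if_splits intro: someI_ex)

lemma pinv_Some:
  assumes "\<And>x x'. g x = Some y \<Longrightarrow> g x' = Some y \<Longrightarrow> x = x'"
  shows "pinv g y = Some x \<longleftrightarrow> g x = Some y"
proof
  assume "g x = Some y"
  hence ex: "\<exists>x. g x = Some y" by blast
  hence "g (SOME x. g x = Some y) = Some y" by (rule someI_ex)
  with assms \<open>g x = Some y\<close> have "(SOME x. g x = Some y) = x" by blast
  thus "pinv g y = Some x" using ex unfolding pinv_def by simp
qed (rule pinv_SomeD)

lemma HS_inj: "g \<in> HS T \<Longrightarrow> g x = Some y \<Longrightarrow> g x' = Some y \<Longrightarrow> x = x'"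
  if zlc: "zero_left_cancellative T" for T :: "'a::{semigroup_mult,mult_zero} itself"
proof (induction g arbitrary: x x' y rule: HS.induct)
  case (gen s) thus ?case using zlc unfolding zero_left_cancellative_def theta_Some by metis
next
  case (gen_inv s) thus ?case by (metis pinv_SomeD option.inject)
next
  case (comp g h) thus ?case by (auto simp: map_comp_Some_iff)
qed


lemma comp_assoc_m: "(f \<circ>\<^sub>m g) \<circ>\<^sub>m h = f \<circ>\<^sub>m (g \<circ>\<^sub>m h)"
  by (rule map_eqI2) (auto simp: map_comp_Some_iff)

lemma sum_list_left_id:
  fixes p :: "'b::ring"
  shows "\<forall>b\<in>set bs. p * Q b = Q b \<Longrightarrow> p * sum_list (map Q bs) = sum_list (map Q bs)"
  by (induction bs) (auto simp: distrib_left)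

lemma sum_list_left_zero:
  fixes p :: "'b::ring"
  shows "\<forall>b\<in>set bs. p * Q b = 0 \<Longrightarrow> p * sum_list (map Q bs) = 0"
  by (induction bs) (auto simp: distrib_left)

lemma lprod_sub:
  fixes p :: "'b::ring"
  assumes "bs \<noteq> []" "distinct bs" "p*p = p"
    "\<forall>b\<in>set bs. p * Q b = Q b \<and> Q b * p = Q b"
    "\<forall>b\<in>set bs. \<forall>c\<in>set bs. b \<noteq> c \<longrightarrow> Q b * Q c = 0"
  shows "lprod (map (\<lambda>b. p - Q b) bs) = p - sum_list (map Q bs)"
  using assms
proof (induction bs)
  case Nil thus ?case by simp
next
  case (Cons b bs)
  show ?case
  proof (cases "bs = []")
    case True thus ?thesis by simp
  next
    case False
    then obtain c cs where bs: "bs = c # cs" by (cases bs) auto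
    have IH: "lprod (map (\<lambda>b. p - Q b) bs) = p - sum_list (map Q bs)"
      using Cons False by auto
    have l: "lprod (map (\<lambda>b. p - Q b) (b # bs)) = (p - Q b) * lprod (map (\<lambda>b. p - Q b) bs)"
      using bs by simp
    have 1: "p * sum_list (map Q bs) = sum_list (map Q bs)"
      using Cons.prems(4) by (intro sum_list_left_id) auto
    have 2: "Q b * sum_list (map Q bs) = 0"
      using Cons.prems(2,5) by (intro sum_list_left_zero) auto
    have "lprod (map (\<lambda>b. p - Q b) (b # bs)) = (p - Q b) * (p - sum_list (map Q bs))"
      using l IH by simp
    also have "\<dots> = p*p - p * sum_list (map Q bs) - Q b * p + Q b * sum_list (map Q bs)"
      by (simp add: algebra_simps)
    also have "\<dots> = p - sum_list (map Q bs) - Q b" using 1 2 Cons.prems(3,4) by simp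
    finally show ?thesis by (simp add: algebra_simps)
  qed
qed

locale setting = star_algebra sc star for sc :: "complex \<Rightarrow> 'b::ring \<Rightarrow> 'b" and star +
  fixes T :: "'a::{semigroup_mult,mult_zero} itself" and \<pi> :: "('a \<rightharpoonup> 'a) \<Rightarrow> 'b"
  assumes sfa: "strongly_finitely_aligned T" and zlc: "zero_left_cancellative T"
    and rlu: "right_local_units T" and sr: "star_rep T star \<pi>" and ctj: "cover_to_join T \<pi>"
begin

lemma zlcD: "s*t = s*r \<Longrightarrow> s*t \<noteq> 0 \<Longrightarrow> t = (r::'a)"
  using zlc unfolding zero_left_cancellative_def by blast

lemma zlcD2: "s*t = s*r \<Longrightarrow> s*r \<noteq> 0 \<Longrightarrow> t = (r::'a)"
  using zlcD by metis

lemma pinv_theta_Some: "pinv (theta s) y = Some x \<longleftrightarrow> x \<noteq> 0 \<and> s*x \<noteq> 0 \<and> y = (s*x::'a)"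
proof (subst pinv_Some)
  show "theta s x1 = Some y \<Longrightarrow> theta s x2 = Some y \<Longrightarrow> x1 = x2" for x1 x2
    by (auto simp: theta_Some intro: zlcD)
qed (auto simp: theta_Some)

lemma pi_comp: "g \<in> HS T \<Longrightarrow> h \<in> HS T \<Longrightarrow> \<pi> (g \<circ>\<^sub>m h) = \<pi> g * \<pi> h"
  using sr unfolding star_rep_def by blast
lemma pi_pinv: "g \<in> HS T \<Longrightarrow> \<pi> (pinv g) = star (\<pi> g)"
  using sr unfolding star_rep_def by blast
lemma pi_empty: "\<pi> Map.empty = 0"
  using sr unfolding star_rep_def by blast

lemmas HS_simps[intro, simp] = HS.gen HS.gen_inv HS.comp

lemma fLam_HS: "finite L \<Longrightarrow> L \<noteq> {} \<Longrightarrow> fLam (L::'a set) \<in> HS T"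
proof (induction L rule: finite_ne_induct)
  case (singleton u)
  have "fLam {u} = pinv (theta u) \<circ>\<^sub>m theta u"
    by (rule map_eqI2) (auto simp: map_comp_Some_iff fLam_Some theta_Some pinv_theta_Some dest: zlcD2)
  thus ?case by simp
next
  case (insert u L)
  have "fLam (insert u L) = fLam {u} \<circ>\<^sub>m fLam L"
    by (rule map_eqI2) (auto simp: map_comp_Some_iff fLam_Some)
  moreover have "fLam {u} = pinv (theta u) \<circ>\<^sub>m theta u"
    by (rule map_eqI2) (auto simp: map_comp_Some_iff fLam_Some theta_Some pinv_theta_Some dest: zlcD2)
  ultimately show ?case using insert by simp
qed

definition w :: "'a \<Rightarrow> 'a set \<Rightarrow> 'a \<Rightarrow> ('a \<rightharpoonup> 'a)" where
  "w s L t = theta s \<circ>\<^sub>m (fLam L \<circ>\<^sub>m pinv (theta t))"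

definition G where "G = {\<pi> (theta s) * \<pi> (fLam \<Lambda>) * star (\<pi> (theta t)) | s t \<Lambda>.
            finite \<Lambda> \<and> s \<in> \<Lambda> \<and> t \<in> \<Lambda>}"

lemma w_HS: "finite L \<Longrightarrow> L \<noteq> {} \<Longrightarrow> w s L t \<in> HS T"
  unfolding w_def using fLam_HS by simp

lemma pi_w: "finite L \<Longrightarrow> L \<noteq> {} \<Longrightarrow> \<pi> (w s L t) = \<pi> (theta s) * \<pi> (fLam L) * star (\<pi> (theta t))"
  unfolding w_def using fLam_HS by (simp add: pi_comp pi_pinv mult.assoc)

lemma w_G: assumes "finite L" "s \<in> L" "t \<in> L" shows "\<pi> (w s L t) \<in> span G"
proof (rule span_base)
  have "L \<noteq> {}" using assms by auto
  thus "\<pi> (w s L t) \<in> G" unfolding G_def using assms pi_w by blast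
qed

lemma G_w: "x \<in> G \<Longrightarrow> \<exists>s L t. finite L \<and> s \<in> L \<and> t \<in> L \<and> x = \<pi> (w s L t)"
proof -
  assume "x \<in> G"
  then obtain s t L where h: "x = \<pi> (theta s) * \<pi> (fLam L) * star (\<pi> (theta t))"
    "finite L" "s \<in> L" "t \<in> L" unfolding G_def by blast
  have "L \<noteq> {}" using h by auto
  hence "x = \<pi> (w s L t)" using pi_w[of L s t] h by simp
  thus ?thesis using h by blast
qed

lemma lu_fix: "s*e = s \<Longrightarrow> s*x \<noteq> 0 \<Longrightarrow> e*x = (x::'a)"
  by (metis mult.assoc zlcD)

end

context setting begin

lemma w_Some: "w s L t x = Some z \<longleftrightarrow> (\<exists>y. y\<noteq>0 \<and> t * y\<noteq>0 \<and> x = t * y \<and> (\<forall>u\<in>L. u * y\<noteq>0) \<and> s * y \<noteq>0 \<and> z = s * y)"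
  unfolding w_def by (auto simp: map_comp_Some_iff theta_Some fLam_Some pinv_theta_Some)

lemma theta_w: assumes "s * e = s" shows "theta s = w s {s,e} e"
proof (rule map_eqI2)
  fix x z
  show "theta s x = Some z \<longleftrightarrow> w s {s, e} e x = Some z"
  proof
    assume "theta s x = Some z"
    hence h: "x \<noteq> 0" "s * x \<noteq> 0" "z = s * x" by (auto simp: theta_Some)
    hence "e * x = x" using lu_fix assms by blast
    thus "w s {s, e} e x = Some z" using h by (auto simp: w_Some intro!: exI[of _ x])
  next
    assume "w s {s, e} e x = Some z"
    then obtain y where "y\<noteq>0" "e * y\<noteq>0" "x = e * y" "s * y\<noteq>0" "z = s * y" by (auto simp: w_Some)
    thus "theta s x = Some z" using assms by (auto simp: theta_Some mult.assoc[symmetric])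
  qed
qed

lemma pinv_theta_w: assumes "s * e = s" shows "pinv (theta s) = w e {s,e} s"
proof (rule map_eqI2)
  fix x z
  show "pinv (theta s) x = Some z \<longleftrightarrow> w e {s, e} s x = Some z"
  proof
    assume "pinv (theta s) x = Some z"
    hence h: "z \<noteq> 0" "s * z \<noteq> 0" "x = s * z" by (auto simp: pinv_theta_Some)
    hence "e * z = z" using lu_fix assms by blast
    thus "w e {s, e} s x = Some z" using h by (auto simp: w_Some intro!: exI[of _ z])
  next
    assume "w e {s, e} s x = Some z"
    then obtain y where "y\<noteq>0" "s * y\<noteq>0" "x = s * y" "e * y\<noteq>0" "z = e * y" by (auto simp: w_Some)
    moreover have "e * y = y" using lu_fix assms \<open>s * y\<noteq>0\<close> by blast
    ultimately show "pinv (theta s) x = Some z" by (auto simp: pinv_theta_Some)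
  qed
qed

lemma theta_comp_w: "theta r \<circ>\<^sub>m w s L t = w (r* s) (insert (r* s) L) t"
proof (rule map_eqI2)
  fix x z
  show "(theta r \<circ>\<^sub>m w s L t) x = Some z \<longleftrightarrow> w (r* s) (insert (r* s) L) t x = Some z"
    unfolding map_comp_Some_iff w_Some theta_Some
    by (auto simp: mult.assoc) (metis mult_zero_right)+
qed

lemma w_comp: assumes "t \<in> L"
  shows "w r' {b} s' \<circ>\<^sub>m (fLam L \<circ>\<^sub>m pinv (theta t)) = w r' (insert r' (insert b ((\<lambda>u. u* s')`L))) (t* s')"
proof (rule map_eqI2)
  fix x z
  show "(w r' {b} s' \<circ>\<^sub>m (fLam L \<circ>\<^sub>m pinv (theta t))) x = Some z \<longleftrightarrow> w r' (insert r' (insert b ((\<lambda>u. u* s')`L))) (t* s') x = Some z"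
  proof
    assume "(w r' {b} s' \<circ>\<^sub>m (fLam L \<circ>\<^sub>m pinv (theta t))) x = Some z"
    then obtain y v where "y\<noteq>0" "t * y\<noteq>0" "x = t * y" "\<forall>u\<in>L. u * y\<noteq>0"
      "v\<noteq>0" "s' * v \<noteq> 0" "y = s' * v" "b * v \<noteq> 0" "r' * v\<noteq>0" "z = r' * v"
      by (auto simp: map_comp_Some_iff w_Some fLam_Some pinv_theta_Some)
    thus "w r' (insert r' (insert b ((\<lambda>u. u* s')`L))) (t* s') x = Some z"
      by (auto simp: w_Some mult.assoc intro!: exI[of _ v])
  next
    assume "w r' (insert r' (insert b ((\<lambda>u. u* s')`L))) (t* s') x = Some z"
    then obtain v where h: "v\<noteq>0" "t* s' * v\<noteq>0" "x = t* s' * v" "\<forall>u\<in>L. u* s' * v\<noteq>0"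
      "b * v \<noteq> 0" "r' * v\<noteq>0" "z = r' * v"
      by (auto simp: w_Some)
    have "s' * v \<noteq> 0" using h(2) by (metis mult.assoc mult_zero_right)
    thus "(w r' {b} s' \<circ>\<^sub>m (fLam L \<circ>\<^sub>m pinv (theta t))) x = Some z"
      using h by (auto simp: map_comp_Some_iff w_Some fLam_Some pinv_theta_Some mult.assoc)
  qed
qed

end

context setting begin

lemma idem_fix: assumes "h \<in> idemH T" "h x = Some y" shows "y = x"
proof -
  have hh: "h \<circ>\<^sub>m h = h" and hs: "h \<in> HS T" using assms(1) by (auto simp: idemH_def)
  have "(h \<circ>\<^sub>m h) x = Some y" using hh assms(2) by simp
  then obtain k where "h x = Some k" "h k = Some y" by (auto simp: map_comp_Some_iff)
  hence "h y = Some y" using assms(2) by simp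
  thus "y = x" using HS_inj[OF zlc hs assms(2)] by simp
qed

lemma in_rideal: "y \<in> rideal b \<longleftrightarrow> (\<exists>v. y = b * v)"
  by (auto simp: rideal_def)

lemma decomp: "\<exists>B rb sb. finite B \<and> \<pi> (pinv (theta r) \<circ>\<^sub>m theta s) = (\<Sum>b\<in>B. \<pi> (w (rb b) {b} (sb b)))"
proof -
  obtain B where B: "finite B" "0 \<notin> B" "rideal r \<inter> rideal s = insert 0 (\<Union>b\<in>B. rideal b)"
    "\<forall>b\<in>B. \<forall>b'\<in>B. b \<noteq> b' \<longrightarrow> rideal b \<inter> rideal b' = {0}"
  proof -
    have "\<forall>s t::'a. \<exists>B. finite B \<and> 0 \<notin> B \<and>
        rideal s \<inter> rideal t = insert 0 (\<Union>b\<in>B. rideal b) \<and>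
        (\<forall>b\<in>B. \<forall>b'\<in>B. b \<noteq> b' \<longrightarrow> rideal b \<inter> rideal b' = {0})"
      using sfa unfolding strongly_finitely_aligned_def .
    hence "\<exists>B. finite B \<and> 0 \<notin> B \<and>
        rideal r \<inter> rideal s = insert 0 (\<Union>b\<in>B. rideal b) \<and>
        (\<forall>b\<in>B. \<forall>b'\<in>B. b \<noteq> b' \<longrightarrow> rideal b \<inter> rideal b' = {0})"
      by (elim allE[of _ r] allE[of _ s])
    thus ?thesis using that by (elim exE conjE) 
  qed
  have mem: "\<exists>x y. b = r * x \<and> b = s * y" if "b \<in> B" for b
  proof -
    obtain e where "b * e = b" using rlu unfolding right_local_units_def by blast
    hence "b \<in> rideal b" by (metis in_rideal)
    hence "b \<in> insert 0 (\<Union>b\<in>B. rideal b)" using that by (intro insertI2 UN_I)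
    hence "b \<in> rideal r \<inter> rideal s" by (simp only: B(3))
    hence "b \<in> rideal r" "b \<in> rideal s" by (rule IntD1, rule IntD2)
    thus ?thesis unfolding in_rideal by blast
  qed
  have "\<forall>b\<in>B. \<exists>p. b = r * fst p \<and> b = s * snd p"
  proof
    fix b assume "b \<in> B"
    from mem[OF this] obtain x y where "b = r * x" "b = s * y" by blast
    thus "\<exists>p. b = r * fst p \<and> b = s * snd p" by (intro exI[of _ "(x,y)"]) simp
  qed
  hence "\<exists>f. \<forall>b\<in>B. b = r * fst (f b) \<and> b = s * snd (f b)" by (rule bchoice)
  then obtain pf where pf: "\<forall>b\<in>B. b = r * fst (pf b) \<and> b = s * snd (pf b)" by blast
  define rb where "rb = (\<lambda>b. fst (pf b))"
  define sb where "sb = (\<lambda>b. snd (pf b))"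
  have rbsb: "\<forall>b\<in>B. b = r * rb b \<and> b = s * sb b" using pf unfolding rb_def sb_def .
  define g where "g = pinv (theta r) \<circ>\<^sub>m theta s"
  have g_Some: "g x = Some z \<longleftrightarrow> x\<noteq>0 \<and> s * x\<noteq>0 \<and> z\<noteq>0 \<and> r * z\<noteq>0 \<and> s * x = r * z" for x z
    unfolding g_def by (auto simp: map_comp_Some_iff theta_Some pinv_theta_Some)
  have key: "\<exists>b\<in>B. \<exists>v. v\<noteq>0 \<and> b * v\<noteq>0 \<and> x = sb b * v \<and> z = rb b * v" if "g x = Some z" for x z
  proof -
    have h: "x\<noteq>0" "s * x\<noteq>0" "z\<noteq>0" "r * z\<noteq>0" "s * x = r * z" using that g_Some by auto
    have "s * x \<in> rideal r" unfolding in_rideal using h(5) by (intro exI[of _ z])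
    moreover have "s * x \<in> rideal s" unfolding in_rideal by (intro exI[of _ x]) (rule refl)
    ultimately have "s * x \<in> rideal r \<inter> rideal s" by (rule IntI)
    hence "s * x \<in> insert 0 (\<Union>b\<in>B. rideal b)" by (simp only: B(3))
    hence "s * x \<in> (\<Union>b\<in>B. rideal b)" using h(2) by blast
    then obtain b where b: "b \<in> B" "s * x \<in> rideal b" by blast
    then obtain v where v: "s * x = b * v" by (auto simp: in_rideal)
    have "v \<noteq> 0" using v h(2) by auto
    have bb: "b = r * rb b" "b = s * sb b" using rbsb b(1) by auto
    have "s * (sb b * v) = (s * sb b) * v" by (simp add: mult.assoc)
    also have "\<dots> = s * x" using v bb(2) by simp
    finally have "s * x = s * (sb b * v)" by simp
    hence "x = sb b * v" using zlcD h(2) by metis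
    moreover have "r * (rb b * v) = (r * rb b) * v" by (simp add: mult.assoc)
    hence "r * z = r * (rb b * v)" using v h(5) bb(1) by simp
    hence "z = rb b * v" using zlcD h(4) by metis
    ultimately show ?thesis using b(1) v h(2) \<open>v \<noteq> 0\<close> by auto
  qed
  show ?thesis
  proof (cases "B = {}")
    case True
    hence "g = Map.empty" using key by (metis empty_iff not_Some_eq)
    thus ?thesis using True B(1) pi_empty g_def by auto
  next
    case False
    define e where "e = pinv (theta s) \<circ>\<^sub>m (theta r \<circ>\<^sub>m g)"
    have e_Some: "e x = Some y \<longleftrightarrow> y = x \<and> (\<exists>z. g x = Some z)" for x y
    proof
      assume "e x = Some y"
      then obtain z where z: "g x = Some z" "pinv (theta s) (r * z) = Some y"
        unfolding e_def by (auto simp: map_comp_Some_iff theta_Some)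
      hence "y = x" using g_Some[of x z] by (auto simp: pinv_theta_Some dest: zlcD2)
      thus "y = x \<and> (\<exists>z. g x = Some z)" using z by blast
    next
      assume "y = x \<and> (\<exists>z. g x = Some z)"
      then obtain z where "y = x" "g x = Some z" by blast
      thus "e x = Some y" using g_Some[of x z]
        unfolding e_def by (auto simp: map_comp_Some_iff theta_Some pinv_theta_Some)
    qed
    have bb: "s * sb b = b" "r * rb b = b" if "b \<in> B" for b using rbsb that by auto
    have sbv: "s * (sb b * v) = b * v" "r * (rb b * v) = b * v" if "b \<in> B" for b v
      using bb[OF that] by (simp_all add: mult.assoc[symmetric])
    have nz: "sb b * v \<noteq> 0" "rb b * v \<noteq> 0" if "b \<in> B" "b * v \<noteq> 0" for b v
      using sbv[OF that(1), of v] that(2) by auto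
    have gD: "g (sb b * v) = Some (rb b * v)" if "b \<in> B" "v \<noteq> 0" "b * v \<noteq> 0" for b v
      unfolding g_Some using sbv[OF that(1), of v] nz[OF that(1,3)] that(2,3) by simp
    define D where "D b x \<longleftrightarrow> (\<exists>v. v\<noteq>0 \<and> b * v\<noteq>0 \<and> x = sb b * v)" for b x
    define E where "E x \<longleftrightarrow> (\<exists>z. g x = Some z)" for x
    have e_Some': "e x = Some y \<longleftrightarrow> y = x \<and> E x" for x y using e_Some unfolding E_def .
    define f where "f b = w (sb b) {b} (sb b)" for b
    have f_Some: "f b x = Some y \<longleftrightarrow> y = x \<and> D b x" if "b \<in> B" for b x y
      unfolding f_def w_Some D_def using nz[OF that] by auto
    have DE: "D b x \<Longrightarrow> E x" if "b \<in> B" for b x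
      unfolding D_def E_def using gD[OF that] by blast
    have gHS: "g \<in> HS T" unfolding g_def by simp
    have eHS: "e \<in> HS T" unfolding e_def g_def by simp
    have fHS: "f b \<in> HS T" for b unfolding f_def using w_HS by simp
    have ee: "e \<circ>\<^sub>m e = e" by (rule map_eqI2) (auto simp: map_comp_Some_iff e_Some')
    have eidem: "e \<in> idemH T" using eHS ee by (simp add: idemH_def)
    have ff: "f b \<circ>\<^sub>m f b = f b" if "b \<in> B" for b
      by (rule map_eqI2) (auto simp: map_comp_Some_iff f_Some[OF that])
    have fidem: "f b \<in> idemH T" if "b \<in> B" for b using fHS ff[OF that] by (simp add: idemH_def)
    have ef: "e \<circ>\<^sub>m f b = f b" if "b \<in> B" for b
      by (rule map_eqI2) (auto simp: map_comp_Some_iff f_Some[OF that] e_Some' intro: DE[OF that])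
    have fe: "f b \<circ>\<^sub>m e = f b" if "b \<in> B" for b
      by (rule map_eqI2) (auto simp: map_comp_Some_iff f_Some[OF that] e_Some' intro: DE[OF that])
    have ge: "g \<circ>\<^sub>m e = g"
      by (rule map_eqI2) (auto simp: map_comp_Some_iff e_Some' E_def)
    have gf: "g \<circ>\<^sub>m f b = w (rb b) {b} (sb b)" if "b \<in> B" for b
    proof (rule map_eqI2)
      fix x z
      show "(g \<circ>\<^sub>m f b) x = Some z \<longleftrightarrow> w (rb b) {b} (sb b) x = Some z"
      proof
        assume "(g \<circ>\<^sub>m f b) x = Some z"
        hence "D b x" "g x = Some z" by (auto simp: map_comp_Some_iff f_Some[OF that])
        then obtain v where v: "v\<noteq>0" "b * v\<noteq>0" "x = sb b * v" unfolding D_def by blast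
        hence "z = rb b * v" using gD[OF that v(1,2)] \<open>g x = Some z\<close> by simp
        thus "w (rb b) {b} (sb b) x = Some z" unfolding w_Some using v nz[OF that v(2)]
          by (intro exI[of _ v]) simp
      next
        assume "w (rb b) {b} (sb b) x = Some z"
        then obtain v where v: "v\<noteq>0" "b * v\<noteq>0" "x = sb b * v" "z = rb b * v"
          unfolding w_Some by auto
        hence "D b x" unfolding D_def by blast
        thus "(g \<circ>\<^sub>m f b) x = Some z" using gD[OF that v(1,2)] v
          by (simp add: map_comp_Some_iff f_Some[OF that])
      qed
    qed
    have fdisj: "f b \<circ>\<^sub>m f c = Map.empty" if "b \<in> B" "c \<in> B" "b \<noteq> c" for b c
    proof (rule ext, rule ccontr)
      fix x assume "(f b \<circ>\<^sub>m f c) x \<noteq> None"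
      then obtain y where "(f b \<circ>\<^sub>m f c) x = Some y" by blast
      hence "D b x" "D c x" by (auto simp: map_comp_Some_iff f_Some[OF that(1)] f_Some[OF that(2)])
      then obtain v v' where v: "v\<noteq>0" "b * v\<noteq>0" "x = sb b * v" and v': "v'\<noteq>0" "c * v'\<noteq>0" "x = sb c * v'"
        unfolding D_def by blast
      have "s * x = b * v" using sbv[OF that(1)] v(3) by simp
      moreover have "s * x = c * v'" using sbv[OF that(2)] v'(3) by simp
      ultimately have "s * x \<in> rideal b \<inter> rideal c" unfolding Int_iff in_rideal by blast
      hence "s * x \<in> {0}" using B(4) that by metis
      thus False using \<open>s * x = b * v\<close> v(2) by simp
    qed
    obtain bs where bs: "set bs = B" "distinct bs" using finite_distinct_list[OF B(1)] by blast
    have cover: "is_cover T e (map f bs)"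
      unfolding is_cover_def
    proof (intro conjI ballI impI)
      fix h assume "h \<in> set (map f bs)"
      then obtain b where "b \<in> B" "h = f b" using bs by auto
      thus "h \<in> idemH T" using fidem by simp
    next
      fix h assume "h \<in> set (map f bs)"
      then obtain b where "b \<in> B" "h = f b" using bs by auto
      thus "h = e \<circ>\<^sub>m h" using ef by simp
    next
      fix h assume h: "h \<in> idemH T" "h \<noteq> Map.empty \<and> h = e \<circ>\<^sub>m h"
      then obtain x y where hx: "h x = Some y" by fastforce
      hence "y = x" using idem_fix h(1) by blast
      hence hx: "h x = Some x" using hx by simp
      have "(e \<circ>\<^sub>m h) x = Some x" using h(2) hx by simp
      hence "e x = Some x" using hx by simp
      hence "E x" using e_Some' by blast
      then obtain z where "g x = Some z" unfolding E_def by blast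
      then obtain b v where bv: "b \<in> B" "v\<noteq>0" "b * v\<noteq>0" "x = sb b * v" "z = rb b * v"
        using key by blast
      hence "D b x" unfolding D_def by blast
      hence "f b x = Some x" using f_Some[OF bv(1)] by simp
      hence "(h \<circ>\<^sub>m f b) x = Some x" using hx by simp
      hence "h \<circ>\<^sub>m f b \<noteq> Map.empty" by (metis option.distinct(1))
      thus "\<exists>f'\<in>set (map f bs). h \<circ>\<^sub>m f' \<noteq> Map.empty" using bv(1) bs(1) by auto
    qed
    have bsne: "map f bs \<noteq> []" using bs(1) False by auto
    have "lprod (map (\<lambda>f. \<pi> e - \<pi> f) (map f bs)) = 0"
      using ctj eidem cover bsne unfolding cover_to_join_def by blast
    hence "lprod (map (\<lambda>b. \<pi> e - \<pi> (f b)) bs) = 0" by (simp add: comp_def)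
    moreover have "lprod (map (\<lambda>b. \<pi> e - \<pi> (f b)) bs) = \<pi> e - sum_list (map (\<lambda>b. \<pi> (f b)) bs)"
    proof (rule lprod_sub)
      show "bs \<noteq> []" using bsne by simp
      show "distinct bs" by (rule bs(2))
      show "\<pi> e * \<pi> e = \<pi> e" using pi_comp[OF eHS eHS] ee by simp
      show "\<forall>b\<in>set bs. \<pi> e * \<pi> (f b) = \<pi> (f b) \<and> \<pi> (f b) * \<pi> e = \<pi> (f b)"
        using pi_comp[OF eHS fHS] pi_comp[OF fHS eHS] ef fe bs(1) by metis
      show "\<forall>b\<in>set bs. \<forall>c\<in>set bs. b \<noteq> c \<longrightarrow> \<pi> (f b) * \<pi> (f c) = 0"
        using pi_comp[OF fHS fHS] fdisj pi_empty bs(1) by metis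
    qed
    ultimately have pe0: "\<pi> e = sum_list (map (\<lambda>b. \<pi> (f b)) bs)" by simp
    have "(\<Sum>b\<in>B. \<pi> (f b)) = sum_list (map (\<lambda>b. \<pi> (f b)) bs)"
      using sum.distinct_set_conv_list[OF bs(2)] bs(1) by metis
    hence pe: "\<pi> e = (\<Sum>b\<in>B. \<pi> (f b))" using pe0 by simp
    have "\<pi> g = \<pi> (g \<circ>\<^sub>m e)" using ge by simp
    also have "\<dots> = \<pi> g * \<pi> e" by (rule pi_comp[OF gHS eHS])
    also have "\<dots> = (\<Sum>b\<in>B. \<pi> g * \<pi> (f b))" by (simp add: pe sum_distrib_left)
    also have "\<dots> = (\<Sum>b\<in>B. \<pi> (w (rb b) {b} (sb b)))"
      by (rule sum.cong) (simp_all add: pi_comp[OF gHS fHS, symmetric] gf)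
    finally show ?thesis using B(1) g_def by blast
  qed
qed

end

context setting begin

lemma mult_theta: assumes "finite L" "s \<in> L" "t \<in> L"
  shows "\<pi> (theta r) * \<pi> (w s L t) \<in> span G"
proof -
  have "L \<noteq> {}" using assms by auto
  hence "\<pi> (theta r) * \<pi> (w s L t) = \<pi> (theta r \<circ>\<^sub>m w s L t)"
    using pi_comp w_HS assms(1) by simp
  also have "\<dots> = \<pi> (w (r * s) (insert (r * s) L) t)" by (simp add: theta_comp_w)
  finally show ?thesis using w_G assms by simp
qed

lemma mult_pinv: assumes "finite L" "s \<in> L" "t \<in> L"
  shows "\<pi> (pinv (theta r)) * \<pi> (w s L t) \<in> span G"
proof -
  have "L \<noteq> {}" using assms by auto
  hence fHS: "fLam L \<circ>\<^sub>m pinv (theta t) \<in> HS T" using fLam_HS assms(1) by simp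
  obtain B rb sb where B: "finite B" "\<pi> (pinv (theta r) \<circ>\<^sub>m theta s) = (\<Sum>b\<in>B. \<pi> (w (rb b) {b} (sb b)))"
    using decomp by blast
  have "\<pi> (pinv (theta r)) * \<pi> (w s L t) = \<pi> (pinv (theta r) \<circ>\<^sub>m w s L t)"
    using pi_comp w_HS assms(1) \<open>L \<noteq> {}\<close> by simp
  also have "pinv (theta r) \<circ>\<^sub>m w s L t = (pinv (theta r) \<circ>\<^sub>m theta s) \<circ>\<^sub>m (fLam L \<circ>\<^sub>m pinv (theta t))"
    unfolding w_def by (simp add: comp_assoc_m)
  also have "\<pi> \<dots> = \<pi> (pinv (theta r) \<circ>\<^sub>m theta s) * \<pi> (fLam L \<circ>\<^sub>m pinv (theta t))"
    using pi_comp fHS by simp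
  also have "\<dots> = (\<Sum>b\<in>B. \<pi> (w (rb b) {b} (sb b)) * \<pi> (fLam L \<circ>\<^sub>m pinv (theta t)))"
    by (simp add: B(2) sum_distrib_right)
  also have "\<dots> = (\<Sum>b\<in>B. \<pi> (w (rb b) (insert (rb b) (insert b ((\<lambda>u. u * sb b)`L))) (t * sb b)))"
  proof (rule sum.cong)
    fix b assume "b \<in> B"
    have "\<pi> (w (rb b) {b} (sb b)) * \<pi> (fLam L \<circ>\<^sub>m pinv (theta t)) = \<pi> (w (rb b) {b} (sb b) \<circ>\<^sub>m (fLam L \<circ>\<^sub>m pinv (theta t)))"
      using pi_comp[OF w_HS fHS] by simp
    thus "\<pi> (w (rb b) {b} (sb b)) * \<pi> (fLam L \<circ>\<^sub>m pinv (theta t)) = \<pi> (w (rb b) (insert (rb b) (insert b ((\<lambda>u. u * sb b)`L))) (t * sb b))"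
      using w_comp[OF assms(3)] by simp
  qed simp
  also have "\<dots> \<in> span G"
    by (rule span_sum, rule w_G) (use assms in auto)
  finally show ?thesis .
qed

lemma lin: assumes "\<And>x. x \<in> G \<Longrightarrow> a * x \<in> span G" "y \<in> span G" shows "a * y \<in> span G"
  using assms(2)
proof (induction rule: span_induct_alt)
  case base thus ?case by (simp add: span_zero)
next
  case (step c x y)
  have "a * (sc c x + y) = sc c (a * x) + a * y" by (simp add: distrib_left sc_mult_right)
  thus ?case using step assms(1) by (simp add: span_add span_scale)
qed

lemma gen_span: "\<pi> (theta r) \<in> span G" "\<pi> (pinv (theta r)) \<in> span G"
proof -
  obtain e where e: "r * e = r" using rlu unfolding right_local_units_def by blast
  show "\<pi> (theta r) \<in> span G" using theta_w[OF e] w_G[of "{r,e}"] by simp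
  show "\<pi> (pinv (theta r)) \<in> span G" using pinv_theta_w[OF e] w_G[of "{r,e}"] by simp
qed

lemma HS_span: "g \<in> HS T \<Longrightarrow> \<pi> g \<in> span G \<and> (\<forall>y\<in>span G. \<pi> g * y \<in> span G)"
proof (induction g rule: HS.induct)
  case (gen s)
  show ?case using gen_span(1) lin mult_theta G_w by metis
next
  case (gen_inv s)
  show ?case using gen_span(2) lin mult_pinv G_w by metis
next
  case (comp g h)
  thus ?case by (simp add: pi_comp mult.assoc)
qed

lemma part1: assumes "span (\<pi> ` HS T) = UNIV" shows "span G = UNIV"
proof -
  have "\<pi> ` HS T \<subseteq> span G" using HS_span by blast
  hence "span (\<pi> ` HS T) \<subseteq> span G" by (metis span_mono span_span)
  thus ?thesis using assms by blast
qed

lemma Fs: assumes "categorical_at_zero T" "s * x \<noteq> (0::'a)" "u * x \<noteq> 0" "s * y \<noteq> 0" "y \<noteq> 0"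
  shows "u * y \<noteq> 0"
proof -
  obtain e where e: "s * e = s" using rlu unfolding right_local_units_def by blast
  have ex: "e * x = x" and ey: "e * y = y" using lu_fix[OF e] assms by auto
  have "u * e \<noteq> 0" using assms(3) ex by (metis mult.assoc mult_zero_left)
  hence "u * e * y \<noteq> 0" using assms(1,5) ey unfolding categorical_at_zero_def by metis
  thus ?thesis using ey by (simp add: mult.assoc)
qed

lemma part2: assumes "categorical_at_zero T"
  shows "span G \<subseteq> span {\<pi> (theta s) * star (\<pi> (theta t)) | s t::'a. True}" (is "_ \<subseteq> span ?G2")
proof -
  have "G \<subseteq> span ?G2"
  proof
    fix x assume "x \<in> G"
    then obtain s t L where h: "x = \<pi> (theta s) * \<pi> (fLam L) * star (\<pi> (theta t))"
      "finite L" "s \<in> L" "t \<in> L" unfolding G_def by blast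
    have LHS: "fLam L \<in> HS T" using fLam_HS h by auto
    show "x \<in> span ?G2"
    proof (cases "\<forall>u\<in>L. \<forall>y. y \<noteq> 0 \<and> s * y \<noteq> 0 \<longrightarrow> u * y \<noteq> 0")
      case True
      have "theta s \<circ>\<^sub>m fLam L = theta s"
        by (rule map_eqI2) (use True in \<open>auto simp: map_comp_Some_iff theta_Some fLam_Some\<close>)
      hence "x = \<pi> (theta s) * star (\<pi> (theta t))" using h pi_comp[OF HS.gen LHS] by metis
      thus ?thesis by (intro span_base) blast
    next
      case False
      then obtain u y where uy: "u \<in> L" "y \<noteq> 0" "s * y \<noteq> 0" "u * y = 0" by blast
      have "theta s \<circ>\<^sub>m fLam L = Map.empty"
      proof (rule ext, rule ccontr)
        fix z assume "(theta s \<circ>\<^sub>m fLam L) z \<noteq> None"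
        then obtain v where "(theta s \<circ>\<^sub>m fLam L) z = Some v" by blast
        hence "s * z \<noteq> 0" "u * z \<noteq> 0"
          using uy(1) by (auto simp: map_comp_Some_iff theta_Some fLam_Some)
        thus False using Fs[OF assms] uy by metis
      qed
      hence "x = 0" using h pi_comp[OF HS.gen LHS] pi_empty by (metis mult_zero_left)
      thus ?thesis by (simp add: span_zero)
    qed
  qed
  thus ?thesis by (metis span_mono span_span)
qed

end

theorem theorem15p17:
  fixes T :: "'a::{semigroup_mult,mult_zero} itself"
    and sc :: "complex \<Rightarrow> 'b::ring \<Rightarrow> 'b"
    and star :: "'b \<Rightarrow> 'b"
    and \<pi> :: "('a \<rightharpoonup> 'a) \<Rightarrow> 'b"
  assumes "strongly_finitely_aligned T"
    and "zero_left_cancellative T"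
    and "right_local_units T"
    and "star_algebra sc star"
    and "star_rep T star \<pi>"
    and "cover_to_join T \<pi>"
    and "module.span sc (\<pi> ` HS T) = UNIV"
  shows "module.span sc {\<pi> (theta s) * \<pi> (fLam \<Lambda>) * star (\<pi> (theta t)) | s t \<Lambda>.
            finite \<Lambda> \<and> s \<in> \<Lambda> \<and> t \<in> \<Lambda>} = UNIV
     \<and> (right_reductive T \<and> categorical_at_zero T \<longrightarrow>
         module.span sc {\<pi> (theta s) * star (\<pi> (theta t)) | s t::'a. True} = UNIV)"
proof -
  interpret S: setting sc star T \<pi>
    using assms by (simp add: setting_def setting_axioms_def)
  have 1: "S.span S.G = UNIV" using S.part1 assms(7) by simp
  show ?thesis
  proof
    show "module.span sc {\<pi> (theta s) * \<pi> (fLam \<Lambda>) * star (\<pi> (theta t)) | s t \<Lambda>.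
            finite \<Lambda> \<and> s \<in> \<Lambda> \<and> t \<in> \<Lambda>} = UNIV" using 1 unfolding S.G_def .
    show "right_reductive T \<and> categorical_at_zero T \<longrightarrow>
         module.span sc {\<pi> (theta s) * star (\<pi> (theta t)) | s t::'a. True} = UNIV"
      using S.part2 1 by blast
  qed
qed

end
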